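(* Let $d\geq1$, fix constants $0<\kappa_1\leqslant\kappa_2$, let $N$ be a positive integer and let $E_1,\ldots,E_N$ be pairwise disjoint measurable subsets of $\mathbb{T}^d$ with $\mathbb{T}^{d}=\bigcup_{j=1}^{N}E_{j}$, $|E_{j}|=1/N$ and $\kappa_1N^{-1/d}\leqslant\operatorname{diam}(E_{j})\leqslant\kappa_2N^{-1/d}$. Let $0<\beta\leqslant1$ and let $f$ be a non-negative function on $\mathbb{T}^d$ with $|f(x)-f(y)|\leqslant|x-y|^{\beta}$ for all $x,y\in\mathbb{T}^{d}$. For $0<r<1/2$ let \[ J(N,f,r)=N\int_{E_{1}}\cdots N\int_{E_{N}}\int_{\mathbb{T}^{d}}\left\vert \frac{1}{N}\sum_{j=1}^{N}f(z_{j})\chi_{-x+B_{r}}(z_{j})-\int_{-x+B_{r}}f(y)\,dy\right\vert ^{2}dx\,dz_{1}\cdots dz_{N}. \] Then there is a constant $c>0$, independent of $N$, of the decomposition and of $r$, such that for every $0<r<1/2$, \[ J(N,f,r)\leqslant\begin{cases} c\,N^{-1-2\beta/d} & \text{if }\beta<1/2,\\ c\,N^{-1-1/d} & \text{if }\beta\geqslant1/2.\end{cases} \]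
   Context: $\mathbb{T}^{d}=\mathbb{R}^{d}/\mathbb{Z}^{d}$ is identified with $[-1/2,1/2)^{d}$ with Lebesgue measure $|\cdot|$; $|x|$ is the Euclidean norm of the representative of $x$ in $[-1/2,1/2)^d$, and $|x-y|$ is the induced distance (used also for diameters). $B_{r}=\{x\in\mathbb{T}^{d}:|x|<r\}$, $-x+B_r$ is its translate, and $\chi_G$ is the characteristic function of $G$. The constant $c$ may depend on $d$, $\beta$, $\kappa_1,\kappa_2$ and on $f$ (e.g. through $\Vert f\Vert_2$). *)

theory Defs
  imports "HOL-Analysis.Analysis"
begin

text \<open>The torus T^d = R^d/Z^d, identified with the fundamental cube [-1/2,1/2)^d.\<close>

definition torus_cube :: "(real ^ 'd) set" where
  "torus_cube = {x. \<forall>i. -1/2 \<le> x $ i \<and> x $ i < 1/2}"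

text \<open>Representative of a real number modulo 1 in [-1/2,1/2).\<close>
definition trep :: "real \<Rightarrow> real" where
  "trep t = t - of_int \<lfloor>t + 1/2\<rfloor>"

definition tnorm :: "real ^ 'd \<Rightarrow> real" where
  "tnorm x = norm (\<chi> i. trep (x $ i))"

definition tdist :: "real ^ 'd \<Rightarrow> real ^ 'd \<Rightarrow> real" where
  "tdist x y = tnorm (x - y)"

definition tdiam :: "(real ^ 'd) set \<Rightarrow> real" where
  "tdiam E = (SUP p \<in> E \<times> E. tdist (fst p) (snd p))"

definition tball_transl :: "real ^ 'd \<Rightarrow> real \<Rightarrow> (real ^ 'd) set" where
  "tball_transl x r = {z \<in> torus_cube. tnorm (z + x) < r}"

text \<open>J(N,f,r) as a non-negative (extended) integral; the normalized measures N dz_j on E_j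
  are written as N^N times the indicator of E_0 x ... x E_(N-1).\<close>
definition Jfun :: "nat \<Rightarrow> (nat \<Rightarrow> (real ^ 'd) set) \<Rightarrow> (real ^ 'd \<Rightarrow> real) \<Rightarrow> real \<Rightarrow> ennreal" where
  "Jfun N E f r =
     ennreal (real N ^ N) *
     (\<integral>\<^sup>+ z. (\<Prod>j<N. indicator (E j) (z j)) *
        (\<integral>\<^sup>+ x. ennreal (\<bar>(1 / real N) * (\<Sum>j<N. f (z j) * indicator (tball_transl x r) (z j))
                     - (LINT y:tball_transl x r|lebesgue. f y)\<bar>^2) \<partial>(lebesgue_on torus_cube))
      \<partial>(\<Pi>\<^sub>M j\<in>{..<N}. lebesgue_on torus_cube))"

end

theory Submission
  imports Defs
begin


lemma trep_bounds: "-1/2 \<le> trep t \<and> trep t < 1/2"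
  unfolding trep_def by linarith

lemma trep_min:
  fixes m :: int
  shows "\<bar>trep t\<bar> \<le> \<bar>t - of_int m\<bar>"
proof -
  define n where "n = \<lfloor>t + 1/2\<rfloor>"
  have n1: "of_int n \<le> t + 1/2" and n2: "t + 1/2 < of_int n + 1"
    unfolding n_def by linarith+
  have tr: "trep t = t - of_int n" unfolding trep_def n_def by simp
  consider "m = n" | "m \<ge> n + 1" | "m \<le> n - 1" by linarith
  then show ?thesis
  proof cases
    case 1 then show ?thesis by (simp add: tr)
  next
    case 2 then have "real_of_int m \<ge> of_int n + 1" by linarith
    then show ?thesis using n1 n2 tr by linarith
  next
    case 3 then have "real_of_int m \<le> of_int n - 1" by linarith
    then show ?thesis using n1 n2 tr by linarith
  qed
qed

lemma norm_vec_mono: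
  fixes x y :: "real ^ 'n"
  assumes "\<And>i. \<bar>x $ i\<bar> \<le> \<bar>y $ i\<bar>"
  shows "norm x \<le> norm y"
  unfolding norm_vec_def by (rule L2_set_mono) (use assms in auto)

lemma tnorm_le:
  fixes u :: "real ^ 'd" and k :: "'d \<Rightarrow> int"
  shows "tnorm u \<le> norm (u - (\<chi> i. of_int (k i)))"
  unfolding tnorm_def by (rule norm_vec_mono) (simp add: trep_min)

lemma tnorm_eq:
  fixes u :: "real ^ 'd"
  shows "tnorm u = norm (u - (\<chi> i. of_int \<lfloor>u $ i + 1/2\<rfloor>))"
  unfolding tnorm_def trep_def by (rule arg_cong[where f=norm]) (simp add: vec_eq_iff)

lemma tnorm_le_norm: "tnorm (u :: real ^ 'd) \<le> norm u"
proof -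
  have "(\<chi> i. (0::real)) = (0 :: real ^ 'd)" by (simp add: vec_eq_iff)
  then show ?thesis using tnorm_le[of u "\<lambda>_. 0"] by simp
qed

lemma tnorm_nonneg: "0 \<le> tnorm u"
  unfolding tnorm_def by simp

lemma tnorm_triangle:
  fixes u v :: "real ^ 'd"
  shows "tnorm (u + v) \<le> tnorm u + tnorm v"
proof -
  define ku where "ku = (\<lambda>i. \<lfloor>u $ i + 1/2\<rfloor>)"
  define kv where "kv = (\<lambda>i. \<lfloor>v $ i + 1/2\<rfloor>)"
  have "tnorm (u + v) \<le> norm (u + v - (\<chi> i. of_int (ku i + kv i)))"
    by (rule tnorm_le)
  also have "u + v - (\<chi> i. of_int (ku i + kv i)) = (u - (\<chi> i. of_int (ku i))) + (v - (\<chi> i. of_int (kv i)))"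
    by (simp add: vec_eq_iff)
  also have "norm \<dots> \<le> norm (u - (\<chi> i. of_int (ku i))) + norm (v - (\<chi> i. of_int (kv i)))"
    by (rule norm_triangle_ineq)
  also have "\<dots> = tnorm u + tnorm v"
    unfolding tnorm_eq ku_def kv_def by simp
  finally show ?thesis .
qed

lemma tnorm_minus_le: "tnorm (- u :: real ^ 'd) \<le> tnorm u"
proof -
  have "tnorm (- u) \<le> norm (- u - (\<chi> i. of_int (- \<lfloor>u $ i + 1/2\<rfloor>)))"
    by (rule tnorm_le)
  also have "- u - (\<chi> i. of_int (- \<lfloor>u $ i + 1/2\<rfloor>)) = - (u - (\<chi> i. of_int \<lfloor>u $ i + 1/2\<rfloor>))"
    by (simp add: vec_eq_iff)
  finally show ?thesis by (simp only: norm_minus_cancel tnorm_eq[of u])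
qed

lemma tnorm_minus: "tnorm (- u :: real ^ 'd) = tnorm u"
  using tnorm_minus_le[of u] tnorm_minus_le[of "-u"] by simp

lemma tnorm_bound: "tnorm (u :: real ^ 'd) \<le> real CARD('d)"
proof -
  have "tnorm u \<le> (\<Sum>i\<in>UNIV. \<bar>(\<chi> i. trep (u $ i)) $ i\<bar>)"
    unfolding tnorm_def by (rule norm_le_l1_cart)
  also have "\<dots> \<le> (\<Sum>i\<in>(UNIV::'d set). 1)"
  proof (rule sum_mono)
    fix i show "\<bar>(\<chi> i. trep (u $ i)) $ i\<bar> \<le> 1" using trep_bounds[of "u $ i"] by auto
  qed
  finally show ?thesis by simp
qed


lemma trep_measurable[measurable]: "trep \<in> borel_measurable borel"
  unfolding trep_def[abs_def] by measurable

lemma vec_nth_measurable[measurable]: "(\<lambda>x::real ^ 'n. x $ i) \<in> borel_measurable borel"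
  by (intro borel_measurable_continuous_onI continuous_intros)

lemma tnorm_alt: "tnorm (x :: real ^ 'd) = sqrt (\<Sum>i\<in>UNIV. (trep (x $ i))\<^sup>2)"
  unfolding tnorm_def norm_vec_def L2_set_def by simp

lemma tnorm_measurable[measurable]: "tnorm \<in> borel_measurable (borel :: (real ^ 'd) measure)"
  unfolding tnorm_alt[abs_def] by measurable

lemma torus_cube_borel[measurable]: "(torus_cube :: (real ^ 'd) set) \<in> sets borel"
  unfolding torus_cube_def by measurable

lemma torus_cube_lebesgue: "(torus_cube :: (real ^ 'd) set) \<in> sets lebesgue"
  by simp

lemma zero_in_cube: "0 \<in> torus_cube"
  unfolding torus_cube_def by simp

lemma measure_cube: "emeasure lebesgue (torus_cube :: (real ^ 'd) set) = 1"
proof -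
  let ?a = "(\<chi> i. -1/2) :: real ^ 'd" and ?b = "(\<chi> i. 1/2) :: real ^ 'd"
  have sub1: "torus_cube \<subseteq> cbox ?a ?b" unfolding torus_cube_def by (auto simp: mem_box_cart less_imp_le)
  have sub2: "box ?a ?b \<subseteq> torus_cube" unfolding torus_cube_def by (auto simp: mem_box_cart less_imp_le)
  have P: "(\<Prod>b\<in>Basis. (?b - ?a) \<bullet> b) = 1"
    by (rule prod.neutral) (auto simp: Basis_vec_def inner_axis)
  have e1: "emeasure lebesgue (cbox ?a ?b) = 1"
    using P by (simp add: emeasure_lborel_cbox_eq Basis_vec_def inner_axis)
  have e2: "emeasure lebesgue (box ?a ?b) = 1"
    using P by (simp add: emeasure_lborel_box_eq Basis_vec_def inner_axis)
  have "emeasure lebesgue (torus_cube :: (real ^ 'd) set) \<le> 1"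
    using emeasure_mono[OF sub1, of lebesgue] e1 by simp
  moreover have "1 \<le> emeasure lebesgue (torus_cube :: (real ^ 'd) set)"
    using emeasure_mono[OF sub2, of lebesgue] e2 by simp
  ultimately show ?thesis by simp
qed


lemma powr_le_max: "0 \<le> (t::real) \<Longrightarrow> 0 < b \<Longrightarrow> b \<le> 1 \<Longrightarrow> t powr b \<le> max 1 t"
proof (cases "t \<le> 1")
  case True
  assume "0 \<le> t" "0 < b" "b \<le> 1"
  then have "t powr b \<le> 1 powr b" using True by (intro powr_mono2) auto
  then show ?thesis by simp
next
  case False
  assume "0 \<le> t" "0 < b" "b \<le> 1"
  then have "t powr b \<le> t powr 1" using False by (intro powr_mono) auto
  then show ?thesis using False by simp
qed

lemma mem_tball: "t \<in> tball_transl x r \<longleftrightarrow> t \<in> torus_cube \<and> tnorm (t + x) < r"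
  unfolding tball_transl_def by simp

lemma tball_sub: "tball_transl x r \<subseteq> torus_cube"
  unfolding tball_transl_def by auto

context
  fixes f :: "real ^ 'd \<Rightarrow> real" and \<beta> :: real
  assumes b0: "0 < \<beta>" and b1: "\<beta> \<le> 1"
    and fnn: "\<forall>x\<in>torus_cube. 0 \<le> f x"
    and fhol: "\<forall>x\<in>torus_cube. \<forall>y\<in>torus_cube. \<bar>f x - f y\<bar> \<le> tdist x y powr \<beta>"
begin

lemma f_cont: "continuous_on torus_cube f"
  unfolding continuous_on_iff
proof (intro ballI allI impI)
  fix x :: "real ^ 'd" and e :: real assume x: "x \<in> torus_cube" and e: "0 < e"
  show "\<exists>d>0. \<forall>y\<in>(torus_cube::(real^'d) set). dist y x < d \<longrightarrow> dist (f y) (f x) < e"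
  proof (intro exI[of _ "e powr (1/\<beta>)"] conjI ballI impI)
    show "0 < e powr (1/\<beta>)" using e by simp
    fix y assume y: "y \<in> torus_cube" and d: "dist y x < e powr (1 / \<beta>)"
    have "dist (f y) (f x) \<le> tdist y x powr \<beta>" using fhol x y by (simp add: dist_real_def)
    also have "tdist y x \<le> dist y x" unfolding tdist_def dist_norm by (rule tnorm_le_norm)
    then have "tdist y x powr \<beta> < (e powr (1/\<beta>)) powr \<beta>"
      using d b0 by (intro powr_less_mono2) (auto simp: tdist_def tnorm_nonneg)
    also have "(e powr (1/\<beta>)) powr \<beta> = e" using b0 e by (simp add: powr_powr)
    finally show "dist (f y) (f x) < e" .
  qed
qed

lemma f'_borel: "(\<lambda>t. indicator torus_cube t * f t) \<in> borel_measurable borel"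
proof -
  have "f \<in> borel_measurable (restrict_space borel torus_cube)"
    by (rule borel_measurable_continuous_on_restrict[OF f_cont])
  then show ?thesis by (subst (asm) borel_measurable_restrict_space_iff) auto
qed

definition "Mb = f 0 + real CARD('d)"

lemma Mb_nonneg: "0 \<le> Mb"
  using fnn zero_in_cube unfolding Mb_def by auto

lemma f_bound: "x \<in> torus_cube \<Longrightarrow> 0 \<le> f x \<and> f x \<le> Mb"
proof -
  assume x: "x \<in> torus_cube"
  have "f x - f 0 \<le> tdist x 0 powr \<beta>" using fhol x zero_in_cube by fastforce
  also have "\<dots> \<le> max 1 (tdist x 0)" by (rule powr_le_max) (auto simp: b0 b1 tdist_def tnorm_nonneg)
  also have "\<dots> \<le> real CARD('d)" using tnorm_bound[of x] unfolding tdist_def by simp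
  finally show ?thesis using fnn x unfolding Mb_def by auto
qed

lemma g_diff:
  fixes t s p x :: "real ^ 'd" and \<delta> r :: real
  assumes ts: "t \<in> torus_cube" "s \<in> torus_cube" and dl: "0 \<le> \<delta>"
    and close: "\<And>a b. a \<in> {t,s,p} \<Longrightarrow> b \<in> {t,s,p} \<Longrightarrow> tnorm (a - b) \<le> \<delta>"
  shows "\<bar>f t * indicator (tball_transl x r) t - f s * indicator (tball_transl x r) s\<bar>
          \<le> \<delta> powr \<beta> + Mb * indicator {x. r - \<delta> \<le> tnorm (p + x) \<and> tnorm (p + x) < r + \<delta>} x"
proof -
  let ?S = "{x. r - \<delta> \<le> tnorm (p + x) \<and> tnorm (p + x) < r + \<delta>}"
  have ind0: "0 \<le> Mb * indicator ?S x" using Mb_nonneg by simp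
  have dp: "0 \<le> \<delta> powr \<beta>" by simp
  have tri: "\<And>a b. tnorm (a + x) \<le> tnorm (b + x) + tnorm (a - b)"
  proof -
    fix a b :: "real ^ 'd"
    have e: "(b + x) + (a - b) = a + x" by simp
    show "tnorm (a + x) \<le> tnorm (b + x) + tnorm (a - b)" using tnorm_triangle[of "b + x" "a - b"] unfolding e .
  qed
  show ?thesis
  proof (cases "t \<in> tball_transl x r")
    case tin: True
    show ?thesis
    proof (cases "s \<in> tball_transl x r")
      case True
      have "\<bar>f t - f s\<bar> \<le> tdist t s powr \<beta>" using fhol ts by auto
      also have "\<dots> \<le> \<delta> powr \<beta>" using close[of t s] b0
        by (intro powr_mono2) (auto simp: tdist_def tnorm_nonneg)
      finally show ?thesis using tin True ind0 by simp
    next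
      case False
      then have sr: "r \<le> tnorm (s + x)" using ts by (auto simp: mem_tball)
      have tr: "tnorm (t + x) < r" using tin by (auto simp: mem_tball)
      have "tnorm (p + x) \<le> tnorm (t + x) + tnorm (p - t)" by (rule tri)
      moreover have "tnorm (s + x) \<le> tnorm (p + x) + tnorm (s - p)" by (rule tri)
      ultimately have "x \<in> ?S" using close[of p t] close[of s p] sr tr by auto
      then show ?thesis using tin False f_bound[OF ts(1)] apply simp using powr_ge_zero[of \<delta> \<beta>] by linarith
    qed
  next
    case tout: False
    show ?thesis
    proof (cases "s \<in> tball_transl x r")
      case True
      then have sr: "tnorm (s + x) < r" by (auto simp: mem_tball)
      have tr: "r \<le> tnorm (t + x)" using tout ts by (auto simp: mem_tball)
      have "tnorm (p + x) \<le> tnorm (s + x) + tnorm (p - s)" by (rule tri)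
      moreover have "tnorm (t + x) \<le> tnorm (p + x) + tnorm (t - p)" by (rule tri)
      ultimately have "x \<in> ?S" using close[of p s] close[of t p] sr tr by auto
      then show ?thesis using tout True f_bound[OF ts(2)] apply simp using powr_ge_zero[of \<delta> \<beta>] by linarith
    next
      case False
      then show ?thesis using tout ind0 dp by simp
    qed
  qed
qed

end


lemma measure_ball_gen:
  "measure lebesgue (ball (c::real^'d) \<rho>) = unit_ball_vol (real CARD('d)) * (max 0 \<rho>)^CARD('d)"
proof (cases "\<rho> \<le> 0")
  case True
  then show ?thesis by (simp add: ball_empty power_0_left)
next
  case False
  have "emeasure lebesgue (ball c \<rho>) = ennreal (unit_ball_vol (real CARD('d)) * \<rho> ^ CARD('d))"
    using emeasure_ball[of \<rho> c] False by simp
  then have "measure lebesgue (ball c \<rho>) = unit_ball_vol (real CARD('d)) * \<rho> ^ CARD('d)"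
    unfolding measure_def using False by (simp add: unit_ball_vol_nonneg)
  then show ?thesis using False by simp
qed

lemma power_diff_le:
  fixes a b :: real
  assumes "0 \<le> b" "b \<le> a"
  shows "a ^ n - b ^ n \<le> real n * a ^ (n - 1) * (a - b)"
proof (induction n)
  case 0 then show ?case by simp
next
  case (Suc n)
  have "a ^ Suc n - b ^ Suc n = a * (a ^ n - b ^ n) + b ^ n * (a - b)" by (simp add: algebra_simps)
  also have "\<dots> \<le> a * (real n * a ^ (n - 1) * (a - b)) + a ^ n * (a - b)"
    using assms Suc by (intro add_mono mult_left_mono mult_right_mono power_mono) auto
  also have "\<dots> = real (Suc n) * a ^ n * (a - b)"
  proof (cases n)
    case 0 then show ?thesis by simp
  next
    case (Suc m) then show ?thesis by (simp add: algebra_simps)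
  qed
  finally show ?case by simp
qed

definition K3 :: "(real ^ 'd) set" where "K3 = {k. \<forall>i. k $ i \<in> {-1, 0, 1}}"

lemma finite_K3: "finite (K3 :: (real ^ 'd) set)"
proof -
  have "K3 \<subseteq> vec_lambda ` (PiE (UNIV :: 'd set) (\<lambda>_. {-1, 0, 1::real}))"
  proof
    fix k :: "real ^ 'd" assume "k \<in> K3"
    then have "(\<lambda>i. k $ i) \<in> PiE UNIV (\<lambda>_. {-1, 0, 1::real})" unfolding K3_def by auto
    then show "k \<in> vec_lambda ` (PiE (UNIV :: 'd set) (\<lambda>_. {-1, 0, 1::real}))"
      by (intro image_eqI[of _ _ "\<lambda>i. k $ i"]) (auto simp: vec_lambda_eta)
  qed
  moreover have "finite (vec_lambda ` (PiE (UNIV :: 'd set) (\<lambda>_. {-1, 0, 1::real})))"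
    by (intro finite_imageI finite_PiE) auto
  ultimately show ?thesis by (rule finite_subset)
qed

definition shellK :: "real \<Rightarrow> real" where
  "shellK R = real (card (K3 :: (real ^ 'd) set)) * unit_ball_vol (real CARD('d)) * real CARD('d) * R ^ (CARD('d) - 1) * 2"

lemma shell_measure:
  fixes p :: "real ^ 'd" and r \<delta> R :: real
  assumes p: "p \<in> torus_cube" and dl: "0 \<le> \<delta>" and r: "0 < r" and rR: "r + \<delta> \<le> R"
  shows "measure lebesgue ({x. r - \<delta> \<le> tnorm (p + x) \<and> tnorm (p + x) < r + \<delta>} \<inter> torus_cube)
           \<le> shellK TYPE('d) R * \<delta>"
proof -
  let ?S = "{x. r - \<delta> \<le> tnorm (p + x) \<and> tnorm (p + x) < r + \<delta>} \<inter> torus_cube"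
  let ?A = "\<lambda>k. ball (k - p) (r + \<delta>) - ball (k - p) (r - \<delta>)"
  let ?w = "unit_ball_vol (real CARD('d))"
  have sub: "?S \<subseteq> (\<Union>k\<in>K3. ?A k)"
  proof
    fix x assume x: "x \<in> ?S"
    define k :: "real ^ 'd" where "k = (\<chi> i. of_int \<lfloor>(p + x) $ i + 1/2\<rfloor>)"
    have "k \<in> K3" unfolding K3_def mem_Collect_eq
    proof (intro allI)
      fix i
      have "-1/2 \<le> p $ i" "p $ i < 1/2" "-1/2 \<le> x $ i" "x $ i < 1/2"
        using p x unfolding torus_cube_def by auto
      define m where "m = \<lfloor>(p + x) $ i + 1/2\<rfloor>"
      have "-1 \<le> m \<and> m \<le> 1" unfolding m_def using \<open>-1/2 \<le> p $ i\<close> \<open>p $ i < 1/2\<close> \<open>-1/2 \<le> x $ i\<close> \<open>x $ i < 1/2\<close>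
        by (simp only: vector_add_component) linarith
      then have "m = -1 \<or> m = 0 \<or> m = 1" by linarith
      then have "\<lfloor>(p + x) $ i + 1/2\<rfloor> \<in> {-1, 0, 1}" unfolding m_def by auto
      then show "k $ i \<in> {-1, 0, 1}" unfolding k_def by auto
    qed
    moreover have "tnorm (p + x) = dist x (k - p)"
      unfolding tnorm_eq[of "p + x"] k_def dist_norm by (simp add: algebra_simps)
    ultimately show "x \<in> (\<Union>k\<in>K3. ?A k)" using x by (auto simp: dist_commute intro!: bexI[of _ k])
  qed
  have Ameas: "\<And>k. ?A k \<in> sets lebesgue" by auto
  have Abound: "measure lebesgue (?A k) \<le> ?w * real CARD('d) * R ^ (CARD('d) - 1) * 2 * \<delta>" for k
  proof -
    let ?a = "r + \<delta>" and ?b = "max 0 (r - \<delta>)"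
    have "measure lebesgue (?A k) = measure lebesgue (ball (k - p) ?a) - measure lebesgue (ball (k - p) (r - \<delta>))"
      using dl by (intro measurable_measure_Diff) (auto intro!: bounded_set_imp_lmeasurable)
    also have "\<dots> = ?w * (?a ^ CARD('d) - ?b ^ CARD('d))"
      unfolding measure_ball_gen using r dl by (simp add: algebra_simps)
    also have "\<dots> \<le> ?w * (real CARD('d) * ?a ^ (CARD('d) - 1) * (?a - ?b))"
      using r dl by (intro mult_left_mono power_diff_le) (auto simp: unit_ball_vol_nonneg)
    also have "\<dots> \<le> ?w * (real CARD('d) * R ^ (CARD('d) - 1) * (2 * \<delta>))"
      using r dl rR by (intro mult_left_mono mult_mono power_mono) (auto simp: unit_ball_vol_nonneg)
    finally show ?thesis by (simp add: algebra_simps)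
  qed
  have "?S \<in> sets borel" by measurable
  then have Sm: "?S \<in> sets lebesgue" by (metis sets_completionI_sets sets_lborel)
  have "measure lebesgue ?S \<le> measure lebesgue (\<Union>k\<in>K3. ?A k)"
    by (rule measure_mono_fmeasurable[OF sub Sm])
       (auto intro!: fmeasurable_UN_bound finite_K3 bounded_set_imp_lmeasurable)
  also have "\<dots> \<le> (\<Sum>k\<in>K3. measure lebesgue (?A k))"
    by (rule measure_UNION_le[OF finite_K3 Ameas])
  also have "\<dots> \<le> (\<Sum>k\<in>(K3::(real^'d) set). ?w * real CARD('d) * R ^ (CARD('d) - 1) * 2 * \<delta>)"
    by (rule sum_mono) (rule Abound)
  also have "\<dots> = shellK TYPE('d) R * \<delta>" unfolding shellK_def by simp
  finally show ?thesis .
qed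




lemma id_L[measurable]: "(\<lambda>x. x) \<in> measurable (lebesgue_on S) (borel :: ('a::euclidean_space) measure)"
  using id_borel_measurable_lebesgue_on[of S] by (simp add: id_def)

lemma borel_L: "h \<in> borel_measurable borel \<Longrightarrow> h \<in> borel_measurable (lebesgue_on (S :: ('a::euclidean_space) set))"
  using measurable_compose[OF id_L] by blast

lemma tdist_le_tdiam:
  assumes "a \<in> E" "b \<in> E"
  shows "tdist a b \<le> tdiam (E :: (real ^ 'd) set)"
proof -
  have "(\<lambda>p. tdist (fst p) (snd p)) (a, b) \<le> (SUP p\<in>E \<times> E. tdist (fst p) (snd p))"
  proof (rule cSUP_upper)
    show "(a, b) \<in> E \<times> E" using assms by auto
    show "bdd_above ((\<lambda>p. tdist (fst p) (snd p)) ` (E \<times> E))"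
      by (rule bdd_aboveI[of _ "real CARD('d)"]) (auto simp: tdist_def tnorm_bound)
  qed
  then show ?thesis unfolding tdiam_def by simp
qed

abbreviation LL :: "(real ^ 'd) measure" where "LL \<equiv> lebesgue_on torus_cube"

lemma space_LL: "space LL = torus_cube" by simp

lemma LL_finite: "finite_measure LL"
  by (rule finite_measureI) (simp add: emeasure_restrict_space measure_cube)

lemma LL_sigma: "sigma_finite_measure LL"
  using LL_finite finite_measure_def by blast

lemma LL_prod: "product_sigma_finite (\<lambda>_::nat. LL)"
  unfolding product_sigma_finite_def using LL_sigma by blast

lemma integrable_LL:
  "h \<in> borel_measurable LL \<Longrightarrow> (\<And>t. t \<in> torus_cube \<Longrightarrow> \<bar>h t\<bar> \<le> B) \<Longrightarrow> integrable LL (h :: _ \<Rightarrow> real)"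
  by (rule finite_measure.integrable_const_bound[OF LL_finite, of _ B]) auto

context
  fixes f :: "real ^ 'd \<Rightarrow> real" and \<beta> :: real
  assumes b0: "0 < \<beta>" and b1: "\<beta> \<le> 1"
    and fnn: "\<forall>x\<in>torus_cube. 0 \<le> f x"
    and fhol: "\<forall>x\<in>torus_cube. \<forall>y\<in>torus_cube. \<bar>f x - f y\<bar> \<le> tdist x y powr \<beta>"
begin

definition "fc t = indicator torus_cube t * f t"

lemma fc_borel[measurable]: "fc \<in> borel_measurable borel"
  unfolding fc_def[abs_def] using f'_borel[OF b0 b1 fnn fhol] .

definition "gg r x t = fc t * indicator (tball_transl x r) t"

lemma gg_eq: "gg r x t = f t * indicator (tball_transl x r) t"
  unfolding gg_def fc_def using tball_sub[of x r] by (auto simp: indicator_def)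

lemma gg_alt: "gg r x t = fc t * indicator {q. snd q \<in> torus_cube \<and> tnorm (snd q + fst q) < r} (x, t)"
  unfolding gg_def by (simp add: indicator_def mem_tball)

lemma gg_meas[measurable]: "(\<lambda>p. gg r (fst p) (snd p)) \<in> borel_measurable (borel \<Otimes>\<^sub>M borel)"
  unfolding gg_alt by measurable

lemma Mb_eq: "Mb f = f 0 + real CARD('d)"
  using Mb_def[OF b0 b1 fnn fhol] .

lemma Mb_nn: "0 \<le> Mb f" using Mb_nonneg[OF b0 b1 fnn fhol] .

lemma gg_bound: "\<bar>gg r x t\<bar> \<le> Mb f"
  using f_bound[OF b0 b1 fnn fhol, of t] Mb_nn unfolding gg_eq by (auto simp: indicator_def mem_tball)

lemma gg_nn: "0 \<le> gg r x t"
  using f_bound[OF b0 b1 fnn fhol, of t] unfolding gg_eq by (auto simp: indicator_def mem_tball)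

lemma gg_meas_LP:
  assumes j: "j \<in> I"
  shows "(\<lambda>w. gg r (fst w) (snd w j)) \<in> borel_measurable (lebesgue_on S \<Otimes>\<^sub>M PiM I (\<lambda>_. lebesgue_on S))"
proof -
  have 1: "(\<lambda>w. fst w) \<in> measurable (lebesgue_on S \<Otimes>\<^sub>M PiM I (\<lambda>_. lebesgue_on S)) borel"
    by (rule measurable_compose[OF measurable_fst id_L])
  have 2: "(\<lambda>w. snd w j) \<in> measurable (lebesgue_on S \<Otimes>\<^sub>M PiM I (\<lambda>_. lebesgue_on S)) borel"
    by (rule measurable_compose[OF measurable_compose[OF measurable_snd measurable_component_singleton[OF j]] id_L])
  have "(\<lambda>w. (fst w, snd w j)) \<in> measurable (lebesgue_on S \<Otimes>\<^sub>M PiM I (\<lambda>_. lebesgue_on S)) (borel \<Otimes>\<^sub>M borel)"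
    using 1 2 by (rule measurable_Pair)
  from measurable_compose[OF this gg_meas[of r]] show ?thesis by simp
qed

lemma gg_meas_x: "(\<lambda>x. gg r x t) \<in> borel_measurable (lebesgue_on S)"
proof -
  have "(\<lambda>x. (x, t)) \<in> measurable (lebesgue_on S) (borel \<Otimes>\<^sub>M borel)" by measurable
  from measurable_compose[OF this gg_meas[of r]] show ?thesis by simp
qed

lemma gg_meas_t: "(\<lambda>t. gg r x t) \<in> borel_measurable (lebesgue_on S)"
proof -
  have "(\<lambda>t. (x, t)) \<in> measurable (lebesgue_on S) (borel \<Otimes>\<^sub>M borel)" by measurable
  from measurable_compose[OF this gg_meas[of r]] show ?thesis by simp
qed

lemma gg_meas_borel_t: "(\<lambda>t. gg r x t) \<in> borel_measurable borel"
proof -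
  have "(\<lambda>t. (x, t)) \<in> measurable borel (borel \<Otimes>\<^sub>M borel)" by measurable
  from measurable_compose[OF this gg_meas[of r]] show ?thesis by simp
qed

definition "II r x = (LINT y:tball_transl x r|lebesgue. f y)"

lemma II_eq: "II r x = integral\<^sup>L lborel (\<lambda>y. gg r x y)"
proof -
  have "II r x = integral\<^sup>L lebesgue (\<lambda>y. gg r x y)"
    unfolding II_def set_lebesgue_integral_def gg_eq by (simp add: mult.commute)
  also have "\<dots> = integral\<^sup>L lborel (\<lambda>y. gg r x y)"
    by (rule integral_completion) (simp add: gg_meas_borel_t)
  finally show ?thesis .
qed

lemma II_meas[measurable]: "II r \<in> borel_measurable borel"
proof -
  have "(\<lambda>(x, y). gg r x y) \<in> borel_measurable (borel \<Otimes>\<^sub>M lborel)"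
    using gg_meas[of r] by (simp add: case_prod_beta' measurable_cong_sets[OF refl sets_pair_measure_cong[OF refl sets_lborel]])
  then have "(\<lambda>x. integral\<^sup>L lborel (\<lambda>y. gg r x y)) \<in> borel_measurable borel"
    by (rule lborel.borel_measurable_lebesgue_integral)
  then show ?thesis unfolding II_eq[abs_def] .
qed

context
  fixes N :: nat and E :: "nat \<Rightarrow> (real ^ 'd) set" and r \<delta> :: real
  assumes N: "0 < N"
    and Emeas: "\<And>j. j < N \<Longrightarrow> E j \<in> sets lebesgue"
    and Esub: "\<And>j. j < N \<Longrightarrow> E j \<subseteq> torus_cube"
    and Edisj: "\<And>i j. i < N \<Longrightarrow> j < N \<Longrightarrow> i \<noteq> j \<Longrightarrow> E i \<inter> E j = {}"
    and Eunion: "(\<Union>j<N. E j) = torus_cube"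
    and Emeasure: "\<And>j. j < N \<Longrightarrow> measure lebesgue (E j) = 1 / real N"
    and Ediam: "\<And>j. j < N \<Longrightarrow> tdiam (E j) \<le> \<delta>"
    and r0: "0 < r" and d0: "0 \<le> \<delta>"
begin

lemma E_LL: "j < N \<Longrightarrow> E j \<in> sets LL"
  using Emeas Esub by (auto simp: sets_restrict_space_iff)

lemma measure_E_LL: "j < N \<Longrightarrow> measure LL (E j) = 1 / real N"
  using Emeasure Esub by (subst measure_restrict_space) auto

lemma int_ind_E: "j < N \<Longrightarrow> integral\<^sup>L LL (indicator (E j) :: _ \<Rightarrow> real) = 1 / real N"
  using measure_E_LL E_LL LL_finite Esub by (simp add: finite_measure.emeasure_finite Int_absorb2)

lemma E_nonempty: "j < N \<Longrightarrow> E j \<noteq> {}"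
  using measure_E_LL N by fastforce

definition "pt j = (SOME p. p \<in> E j)"

lemma pt_in: "j < N \<Longrightarrow> pt j \<in> E j"
  unfolding pt_def using E_nonempty by (simp add: some_in_eq)

definition "aa j x = real N * integral\<^sup>L LL (\<lambda>t. indicator (E j) t * gg r x t)"
definition "YY j x t = gg r x t - aa j x"
definition "SS j = {x. r - \<delta> \<le> tnorm (pt j + x) \<and> tnorm (pt j + x) < r + \<delta>} \<inter> torus_cube"
definition "bb j x = \<delta> powr \<beta> + Mb f * indicator (SS j) x"

lemma ind_gg_meas: "j < N \<Longrightarrow> (\<lambda>t. indicator (E j) t * gg r x t) \<in> borel_measurable LL"
  by (intro borel_measurable_times borel_measurable_indicator E_LL gg_meas_t)

lemma ind_gg_integrable: "j < N \<Longrightarrow> integrable LL (\<lambda>t. indicator (E j) t * gg r x t)"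
proof (rule integrable_LL[of _ "Mb f"])
  assume "j < N" then show "(\<lambda>t. indicator (E j) t * gg r x t) \<in> borel_measurable LL" by (rule ind_gg_meas)
  fix t show "\<bar>indicator (E j) t * gg r x t\<bar> \<le> Mb f"
    using gg_bound[of r x t] Mb_nn by (auto simp: indicator_def)
qed

lemma ind_const_integrable: "j < N \<Longrightarrow> integrable LL (\<lambda>t. indicator (E j) t * (c::real))"
  by (intro integrable_mult_left integrable_real_indicator) (auto simp: E_LL finite_measure.emeasure_finite[OF LL_finite] less_top[symmetric])

lemma int_ind_const: "j < N \<Longrightarrow> integral\<^sup>L LL (\<lambda>t. indicator (E j) t * (c::real)) = c / real N"
  using int_ind_E by simp

lemma close_E:
  assumes j: "j < N" and a: "a \<in> E j" and b: "b \<in> E j"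
  shows "tnorm (a - b) \<le> \<delta>"
  using tdist_le_tdiam[OF a b] Ediam[OF j] unfolding tdist_def by simp

lemma gg_diff_E:
  assumes j: "j < N" and x: "x \<in> torus_cube" and t: "t \<in> E j" and s: "s \<in> E j"
  shows "\<bar>gg r x t - gg r x s\<bar> \<le> bb j x"
proof -
  have tC: "t \<in> torus_cube" "s \<in> torus_cube" using Esub[OF j] t s by auto
  have cl: "\<And>a b. a \<in> {t, s, pt j} \<Longrightarrow> b \<in> {t, s, pt j} \<Longrightarrow> tnorm (a - b) \<le> \<delta>"
    using close_E[OF j] t s pt_in[OF j] by blast
  have "\<bar>gg r x t - gg r x s\<bar> \<le> \<delta> powr \<beta> + Mb f * indicator {x. r - \<delta> \<le> tnorm (pt j + x) \<and> tnorm (pt j + x) < r + \<delta>} x"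
    unfolding gg_eq by (rule g_diff[OF b0 b1 fnn fhol tC d0 cl])
  also have "indicator {x. r - \<delta> \<le> tnorm (pt j + x) \<and> tnorm (pt j + x) < r + \<delta>} x = (indicator (SS j) x :: real)"
    using x unfolding SS_def by (simp add: indicator_def)
  finally show ?thesis unfolding bb_def .
qed

lemma YY_bound:
  assumes j: "j < N" and x: "x \<in> torus_cube" and t: "t \<in> E j"
  shows "\<bar>YY j x t\<bar> \<le> bb j x"
proof -
  let ?g = "gg r x"
  have i1: "integrable LL (\<lambda>s. indicator (E j) s * ?g t)" by (rule ind_const_integrable[OF j])
  have i2: "integrable LL (\<lambda>s. indicator (E j) s * ?g s)" by (rule ind_gg_integrable[OF j])
  have eq: "(\<lambda>s. indicator (E j) s * (?g t - ?g s)) = (\<lambda>s. indicator (E j) s * ?g t - indicator (E j) s * ?g s)"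
    by (simp add: algebra_simps)
  have i3: "integrable LL (\<lambda>s. indicator (E j) s * (?g t - ?g s))"
    unfolding eq using i1 i2 by (rule Bochner_Integration.integrable_diff)
  have "integral\<^sup>L LL (\<lambda>s. indicator (E j) s * (?g t - ?g s))
      = integral\<^sup>L LL (\<lambda>s. indicator (E j) s * ?g t) - integral\<^sup>L LL (\<lambda>s. indicator (E j) s * ?g s)"
    unfolding eq using i1 i2 by (rule Bochner_Integration.integral_diff)
  also have "\<dots> = ?g t / real N - aa j x / real N"
    using int_ind_const[OF j] N unfolding aa_def by simp
  finally have YYeq: "YY j x t = real N * integral\<^sup>L LL (\<lambda>s. indicator (E j) s * (?g t - ?g s))"
    unfolding YY_def using N by (simp add: field_simps)
  have "norm (integral\<^sup>L LL (\<lambda>s. indicator (E j) s * (?g t - ?g s))) \<le> integral\<^sup>L LL (\<lambda>s. indicator (E j) s * bb j x)"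
  proof (rule Bochner_Integration.integral_norm_bound_integral[OF i3 ind_const_integrable[OF j]])
    fix s :: "real ^ 'd" assume "s \<in> space LL"
    show "norm (indicator (E j) s * (?g t - ?g s)) \<le> indicator (E j) s * bb j x"
      using gg_diff_E[OF j x t, of s] by (auto simp: indicator_def)
  qed
  also have "\<dots> = bb j x / real N" by (rule int_ind_const[OF j])
  finally show ?thesis unfolding YYeq using N by (simp add: abs_mult field_simps)
qed

abbreviation PP where "PP \<equiv> PiM {..<N} (\<lambda>_. LL)"

lemma gg_int_lebesgue: "II r x = integral\<^sup>L lebesgue (\<lambda>y. gg r x y)"
  unfolding II_def set_lebesgue_integral_def gg_eq by (simp add: mult.commute)

lemma sum_ind_E: "t \<in> torus_cube \<Longrightarrow> (\<Sum>j<N. indicator (E j) t) = (1::real)"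
proof -
  assume t: "t \<in> torus_cube"
  then obtain j0 where j0: "j0 < N" "t \<in> E j0" using Eunion by auto
  have "(\<Sum>j<N. indicator (E j) t) = (\<Sum>j<N. if j = j0 then 1 else (0::real))"
  proof (rule sum.cong[OF refl])
    fix j assume "j \<in> {..<N}"
    then show "indicator (E j) t = (if j = j0 then 1 else (0::real))"
      using Edisj[of j j0] j0 by (auto simp: indicator_def)
  qed
  also have "\<dots> = 1" using j0 by simp
  finally show ?thesis .
qed

lemma II_decomp: "II r x = (\<Sum>j<N. integral\<^sup>L LL (\<lambda>t. indicator (E j) t * gg r x t))"
proof -
  have "(\<Sum>j<N. integral\<^sup>L LL (\<lambda>t. indicator (E j) t * gg r x t))
      = integral\<^sup>L LL (\<lambda>t. \<Sum>j<N. indicator (E j) t * gg r x t)"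
    by (rule Bochner_Integration.integral_sum[symmetric]) (rule ind_gg_integrable, simp)
  also have "\<dots> = integral\<^sup>L LL (\<lambda>t. gg r x t)"
  proof (rule Bochner_Integration.integral_cong[OF refl])
    fix t :: "real ^ 'd" assume "t \<in> space LL"
    then have "t \<in> torus_cube" by simp
    then show "(\<Sum>j<N. indicator (E j) t * gg r x t) = gg r x t"
      using sum_ind_E by (simp add: sum_distrib_right[symmetric])
  qed
  also have "\<dots> = integral\<^sup>L lebesgue (\<lambda>t. indicator torus_cube t * gg r x t)"
    by (subst integral_restrict_space) auto
  also have "\<dots> = integral\<^sup>L lebesgue (\<lambda>t. gg r x t)"
    by (rule arg_cong[where f="integral\<^sup>L lebesgue"]) (auto simp: gg_def fc_def indicator_def)
  finally show ?thesis unfolding gg_int_lebesgue by simp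
qed

lemma II_aa: "II r x = (1 / real N) * (\<Sum>j<N. aa j x)"
  unfolding II_decomp aa_def using N by (simp add: sum_distrib_left[symmetric])

lemma F_eq: "(1 / real N) * (\<Sum>j<N. gg r x (z j)) - II r x = (1 / real N) * (\<Sum>j<N. YY j x (z j))"
  unfolding II_aa YY_def by (simp add: sum_subtractf right_diff_distrib)

definition "hh i k j x t = indicator (E j) t * (if j = i then YY i x t else 1) * (if j = k then YY k x t else 1)"

lemma YY_meas: "(\<lambda>t. YY i x t) \<in> borel_measurable LL"
  unfolding YY_def by (intro borel_measurable_diff gg_meas_t borel_measurable_const)

lemma YY_abs: "\<bar>YY i x t\<bar> \<le> Mb f + \<bar>aa i x\<bar> + 1"
  unfolding YY_def using gg_bound[of r x t] by linarith

lemma hh_integrable: "j < N \<Longrightarrow> integrable LL (hh i k j x)"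
proof (rule integrable_LL[of _ "(Mb f + \<bar>aa i x\<bar> + 1) * (Mb f + \<bar>aa k x\<bar> + 1)"])
  assume j: "j < N"
  show "hh i k j x \<in> borel_measurable LL"
    unfolding hh_def[abs_def] using E_LL[OF j] YY_meas[of i x] YY_meas[of k x]
    by (cases "j = i"; cases "j = k") (auto intro!: borel_measurable_times borel_measurable_indicator)
  fix t :: "real ^ 'd"
  have A: "\<bar>if j = i then YY i x t else 1\<bar> \<le> Mb f + \<bar>aa i x\<bar> + 1"
    using YY_abs[of i x t] Mb_nn by auto
  have B: "\<bar>if j = k then YY k x t else 1\<bar> \<le> Mb f + \<bar>aa k x\<bar> + 1"
    using YY_abs[of k x t] Mb_nn by auto
  have "\<bar>hh i k j x t\<bar> \<le> 1 * \<bar>if j = i then YY i x t else 1\<bar> * \<bar>if j = k then YY k x t else 1\<bar>"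
    unfolding hh_def abs_mult by (intro mult_right_mono) (auto simp: indicator_def)
  also have "\<dots> \<le> (Mb f + \<bar>aa i x\<bar> + 1) * (Mb f + \<bar>aa k x\<bar> + 1)"
    using A B by (simp add: mult_mono)
  finally show "\<bar>hh i k j x t\<bar> \<le> (Mb f + \<bar>aa i x\<bar> + 1) * (Mb f + \<bar>aa k x\<bar> + 1)" .
qed

lemma prod_hh:
  assumes "i < N" "k < N"
  shows "(\<Prod>j<N. indicator (E j) (z j)) * YY i x (z i) * YY k x (z k) = (\<Prod>j<N. hh i k j x (z j))"
  unfolding hh_def prod.distrib using assms by (simp add: prod.delta)

lemma int_hh: "integral\<^sup>L PP (\<lambda>z. \<Prod>j<N. hh i k j x (z j)) = (\<Prod>j<N. integral\<^sup>L LL (hh i k j x))"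
  by (rule product_sigma_finite.product_integral_prod[OF LL_prod]) (auto intro: hh_integrable)

lemma int_hh_ne:
  assumes "i < N" "k < N" "i \<noteq> k"
  shows "(\<Prod>j<N. integral\<^sup>L LL (hh i k j x)) = 0"
proof -
  have "hh i k i x = (\<lambda>t. indicator (E i) t * gg r x t - indicator (E i) t * aa i x)"
    using assms unfolding hh_def[abs_def] YY_def by (auto simp: algebra_simps)
  then have "integral\<^sup>L LL (hh i k i x) = integral\<^sup>L LL (\<lambda>t. indicator (E i) t * gg r x t) - aa i x / real N"
    using ind_gg_integrable[OF assms(1)] ind_const_integrable[OF assms(1)] int_ind_const[OF assms(1)] by simp
  also have "\<dots> = 0" unfolding aa_def using N by simp
  finally show ?thesis using assms by (intro prod_zero) auto
qed

lemma int_hh_eq: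
  assumes "i < N"
  shows "(\<Prod>j<N. integral\<^sup>L LL (hh i i j x)) = integral\<^sup>L LL (\<lambda>t. indicator (E i) t * (YY i x t)\<^sup>2) * (1 / real N) ^ (N - 1)"
proof -
  have "(\<Prod>j<N. integral\<^sup>L LL (hh i i j x)) = integral\<^sup>L LL (hh i i i x) * (\<Prod>j\<in>{..<N} - {i}. integral\<^sup>L LL (hh i i j x))"
    using assms by (intro prod.remove) auto
  also have "(\<Prod>j\<in>{..<N} - {i}. integral\<^sup>L LL (hh i i j x)) = (\<Prod>j\<in>{..<N} - {i}. 1 / real N)"
  proof (rule prod.cong[OF refl])
    fix j assume "j \<in> {..<N} - {i}"
    then have "hh i i j x = indicator (E j)" "j < N" unfolding hh_def[abs_def] by auto
    then show "integral\<^sup>L LL (hh i i j x) = 1 / real N" using int_ind_E by simp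
  qed
  also have "\<dots> = (1 / real N) ^ (N - 1)" using assms by simp
  also have "hh i i i x = (\<lambda>t. indicator (E i) t * (YY i x t)\<^sup>2)"
    unfolding hh_def[abs_def] by (simp add: power2_eq_square mult.assoc)
  finally show ?thesis .
qed

definition "FF x z = (1 / real N) * (\<Sum>j<N. gg r x (z j)) - II r x"

lemma PF_eq:
  "(\<Prod>j<N. indicator (E j) (z j)) * (FF x z)\<^sup>2 = (1 / (real N)\<^sup>2) * (\<Sum>i<N. \<Sum>k<N. \<Prod>j<N. hh i k j x (z j))"
proof -
  let ?P = "(\<Prod>j<N. indicator (E j) (z j)) :: real"
  have "(FF x z)\<^sup>2 = (1 / (real N)\<^sup>2) * ((\<Sum>i<N. YY i x (z i)) * (\<Sum>k<N. YY k x (z k)))"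
    unfolding FF_def F_eq by (simp add: power2_eq_square field_simps)
  also have "(\<Sum>i<N. YY i x (z i)) * (\<Sum>k<N. YY k x (z k)) = (\<Sum>i<N. \<Sum>k<N. YY i x (z i) * YY k x (z k))"
    by (rule sum_product)
  finally have "?P * (FF x z)\<^sup>2 = (1 / (real N)\<^sup>2) * (\<Sum>i<N. \<Sum>k<N. ?P * YY i x (z i) * YY k x (z k))"
    by (simp add: sum_distrib_left mult.assoc mult.left_commute)
  also have "(\<Sum>i<N. \<Sum>k<N. ?P * YY i x (z i) * YY k x (z k)) = (\<Sum>i<N. \<Sum>k<N. \<Prod>j<N. hh i k j x (z j))"
    by (intro sum.cong refl) (simp add: prod_hh)
  finally show ?thesis .
qed

lemma hh_prod_integrable: "integrable PP (\<lambda>z. \<Prod>j<N. hh i k j x (z j))"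
  by (rule product_sigma_finite.product_integrable_prod[OF LL_prod]) (auto intro: hh_integrable)

lemma PF_integrable: "integrable PP (\<lambda>z. (\<Prod>j<N. indicator (E j) (z j)) * (FF x z)\<^sup>2)"
  unfolding PF_eq
  by (intro integrable_mult_right Bochner_Integration.integrable_sum hh_prod_integrable)

lemma PF_integral:
  "integral\<^sup>L PP (\<lambda>z. (\<Prod>j<N. indicator (E j) (z j)) * (FF x z)\<^sup>2)
     = (1 / (real N)\<^sup>2) * (\<Sum>i<N. integral\<^sup>L LL (\<lambda>t. indicator (E i) t * (YY i x t)\<^sup>2) * (1 / real N) ^ (N - 1))"
proof -
  have "integral\<^sup>L PP (\<lambda>z. (\<Prod>j<N. indicator (E j) (z j)) * (FF x z)\<^sup>2)
     = (1 / (real N)\<^sup>2) * (\<Sum>i<N. \<Sum>k<N. integral\<^sup>L PP (\<lambda>z. \<Prod>j<N. hh i k j x (z j)))"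
    unfolding PF_eq
    by (simp add: Bochner_Integration.integral_sum Bochner_Integration.integrable_sum hh_prod_integrable)
  also have "\<dots> = (1 / (real N)\<^sup>2) * (\<Sum>i<N. \<Sum>k<N. if k = i then
        integral\<^sup>L LL (\<lambda>t. indicator (E i) t * (YY i x t)\<^sup>2) * (1 / real N) ^ (N - 1) else 0)"
    by (intro arg_cong[where f="\<lambda>a. (1 / (real N)\<^sup>2) * a"] sum.cong refl)
       (auto simp: int_hh int_hh_ne int_hh_eq)
  also have "\<dots> = (1 / (real N)\<^sup>2) * (\<Sum>i<N. integral\<^sup>L LL (\<lambda>t. indicator (E i) t * (YY i x t)\<^sup>2) * (1 / real N) ^ (N - 1))"
    by simp
  finally show ?thesis .
qed

lemma YY2_int_bound:
  assumes i: "i < N" and x: "x \<in> torus_cube"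
  shows "integral\<^sup>L LL (\<lambda>t. indicator (E i) t * (YY i x t)\<^sup>2) \<le> (bb i x)\<^sup>2 / real N"
proof -
  have "integral\<^sup>L LL (\<lambda>t. indicator (E i) t * (YY i x t)\<^sup>2) \<le> integral\<^sup>L LL (\<lambda>t. indicator (E i) t * (bb i x)\<^sup>2)"
  proof (rule integral_mono)
    show "integrable LL (\<lambda>t. indicator (E i) t * (YY i x t)\<^sup>2)"
      using hh_integrable[OF i, of i i x] unfolding hh_def[abs_def] by (simp add: power2_eq_square mult.assoc)
    show "integrable LL (\<lambda>t. indicator (E i) t * (bb i x)\<^sup>2)" by (rule ind_const_integrable[OF i])
    fix t :: "real ^ 'd" assume "t \<in> space LL"
    show "indicator (E i) t * (YY i x t)\<^sup>2 \<le> indicator (E i) t * (bb i x)\<^sup>2"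
    proof (cases "t \<in> E i")
      case True
      have "\<bar>YY i x t\<bar>\<^sup>2 \<le> (bb i x)\<^sup>2" by (rule power_mono[OF YY_bound[OF i x True] abs_ge_zero])
      then show ?thesis using True by simp
    qed simp
  qed
  also have "\<dots> = (bb i x)\<^sup>2 / real N" by (rule int_ind_const[OF i])
  finally show ?thesis .
qed

lemma PF_bound:
  assumes x: "x \<in> torus_cube"
  shows "integral\<^sup>L PP (\<lambda>z. (\<Prod>j<N. indicator (E j) (z j)) * (FF x z)\<^sup>2)
     \<le> (1 / real N) ^ N * ((1 / (real N)\<^sup>2) * (\<Sum>i<N. (bb i x)\<^sup>2))"
proof -
  have "(\<Sum>i<N. integral\<^sup>L LL (\<lambda>t. indicator (E i) t * (YY i x t)\<^sup>2) * (1 / real N) ^ (N - 1))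
      \<le> (\<Sum>i<N. (bb i x)\<^sup>2 / real N * (1 / real N) ^ (N - 1))"
    by (intro sum_mono mult_right_mono YY2_int_bound x) auto
  also have "\<dots> = (1 / real N) ^ N * (\<Sum>i<N. (bb i x)\<^sup>2)"
  proof -
    have "(1 / real N) ^ (N - 1) * (1 / real N) = (1 / real N) ^ N" using N by (rule power_minus_mult)
    then show ?thesis by (simp add: sum_distrib_left sum_distrib_right field_simps)
  qed
  finally have "(1 / (real N)\<^sup>2) * (\<Sum>i<N. integral\<^sup>L LL (\<lambda>t. indicator (E i) t * (YY i x t)\<^sup>2) * (1 / real N) ^ (N - 1))
      \<le> (1 / (real N)\<^sup>2) * ((1 / real N) ^ N * (\<Sum>i<N. (bb i x)\<^sup>2))"
    by (intro mult_left_mono) auto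
  then show ?thesis unfolding PF_integral by (simp add: field_simps)
qed

lemma nnPF_bound:
  assumes x: "x \<in> torus_cube"
  shows "(\<integral>\<^sup>+ z. (\<Prod>j<N. indicator (E j) (z j)) * ennreal ((FF x z)\<^sup>2) \<partial>PP)
     \<le> ennreal ((1 / real N) ^ N * ((1 / (real N)\<^sup>2) * (\<Sum>i<N. (bb i x)\<^sup>2)))"
proof -
  have "(\<integral>\<^sup>+ z. (\<Prod>j<N. indicator (E j) (z j)) * ennreal ((FF x z)\<^sup>2) \<partial>PP)
      = (\<integral>\<^sup>+ z. ennreal ((\<Prod>j<N. indicator (E j) (z j)) * (FF x z)\<^sup>2) \<partial>PP)"
  proof (rule nn_integral_cong)
    fix z
    have "(\<Prod>j<N. indicator (E j) (z j) :: ennreal) = ennreal (\<Prod>j<N. indicator (E j) (z j))"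
      by (subst prod_ennreal[symmetric]) (auto simp: ennreal_indicator)
    then show "(\<Prod>j<N. indicator (E j) (z j)) * ennreal ((FF x z)\<^sup>2) = ennreal ((\<Prod>j<N. indicator (E j) (z j)) * (FF x z)\<^sup>2)"
      by (simp add: ennreal_mult prod_nonneg)
  qed
  also have "\<dots> = ennreal (integral\<^sup>L PP (\<lambda>z. (\<Prod>j<N. indicator (E j) (z j)) * (FF x z)\<^sup>2))"
    by (rule nn_integral_eq_integral[OF PF_integrable]) (auto simp: prod_nonneg)
  also have "\<dots> \<le> ennreal ((1 / real N) ^ N * ((1 / (real N)\<^sup>2) * (\<Sum>i<N. (bb i x)\<^sup>2)))"
    by (rule ennreal_leI[OF PF_bound[OF x]])
  finally show ?thesis .
qed

lemma SS_borel: "SS j \<in> sets borel"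
  unfolding SS_def by measurable

lemma SS_LL: "SS j \<in> sets LL"
proof -
  have "SS j \<in> sets lebesgue" using SS_borel by (metis sets_completionI_sets sets_lborel)
  then show ?thesis unfolding SS_def by (auto simp: sets_restrict_space_iff)
qed

lemma bb_meas: "(\<lambda>x. bb j x) \<in> borel_measurable LL"
  unfolding bb_def by (intro borel_measurable_add borel_measurable_times borel_measurable_const borel_measurable_indicator SS_LL)

lemma FF_meas_x: "(\<lambda>x. FF x z) \<in> borel_measurable LL"
  unfolding FF_def
  by (intro borel_measurable_diff borel_measurable_times borel_measurable_const borel_measurable_sum gg_meas_x borel_L II_meas)

lemma comp_LP: "j < N \<Longrightarrow> (\<lambda>w. snd w j) \<in> measurable (LL \<Otimes>\<^sub>M PP) LL"
  by (rule measurable_compose[OF measurable_snd measurable_component_singleton]) auto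

lemma FF_meas_pair: "(\<lambda>w. FF (fst w) (snd w)) \<in> borel_measurable (LL \<Otimes>\<^sub>M PP)"
  unfolding FF_def
proof (intro borel_measurable_diff borel_measurable_times borel_measurable_const borel_measurable_sum)
  show "(\<lambda>w. II r (fst w)) \<in> borel_measurable (LL \<Otimes>\<^sub>M PP)"
    by (rule measurable_compose[OF measurable_fst borel_L[OF II_meas]])
  fix j assume "j \<in> {..<N}"
  then show "(\<lambda>w. gg r (fst w) (snd w j)) \<in> borel_measurable (LL \<Otimes>\<^sub>M PP)"
    by (intro gg_meas_LP) auto
qed

lemma H_meas: "(\<lambda>(x, z). (\<Prod>j<N. indicator (E j) (z j)) * ennreal ((FF x z)\<^sup>2)) \<in> borel_measurable (LL \<Otimes>\<^sub>M PP)"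
proof -
  have 1: "(\<lambda>w. \<Prod>j<N. (indicator (E j) (snd w j) :: ennreal)) \<in> borel_measurable (LL \<Otimes>\<^sub>M PP)"
  proof (intro borel_measurable_prod_ennreal)
    fix j assume j: "j \<in> {..<N}"
    then have j': "j < N" by simp
    show "(\<lambda>w. indicator (E j) (snd w j) :: ennreal) \<in> borel_measurable (LL \<Otimes>\<^sub>M PP)"
      by (rule measurable_compose[OF comp_LP[OF j'] borel_measurable_indicator[OF E_LL[OF j']]])
  qed
  have 2: "(\<lambda>w. ennreal ((FF (fst w) (snd w))\<^sup>2)) \<in> borel_measurable (LL \<Otimes>\<^sub>M PP)"
    using FF_meas_pair by measurable
  show ?thesis using borel_measurable_times_ennreal[OF 1 2] by (simp add: case_prod_beta')
qed

lemma PP_sigma: "sigma_finite_measure PP"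
  by (rule product_sigma_finite.sigma_finite[OF LL_prod]) auto

lemma pair_LP: "pair_sigma_finite LL PP"
  unfolding pair_sigma_finite_def using LL_sigma PP_sigma by blast

lemma Jfun_eq: "Jfun N E f r = ennreal (real N ^ N) *
   (\<integral>\<^sup>+ z. (\<Prod>j<N. indicator (E j) (z j)) * (\<integral>\<^sup>+ x. ennreal ((FF x z)\<^sup>2) \<partial>LL) \<partial>PP)"
  unfolding Jfun_def FF_def gg_eq II_def by simp

lemma Jfun_le: "Jfun N E f r \<le> (\<integral>\<^sup>+ x. ennreal ((1 / (real N)\<^sup>2) * (\<Sum>i<N. (bb i x)\<^sup>2)) \<partial>LL)"
proof -
  let ?R = "\<lambda>x. (1 / (real N)\<^sup>2) * (\<Sum>i<N. (bb i x)\<^sup>2)"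
  have "Jfun N E f r = ennreal (real N ^ N) *
     (\<integral>\<^sup>+ z. (\<integral>\<^sup>+ x. (\<Prod>j<N. indicator (E j) (z j)) * ennreal ((FF x z)\<^sup>2) \<partial>LL) \<partial>PP)"
    unfolding Jfun_eq
    by (intro arg_cong[where f="\<lambda>a. ennreal (real N ^ N) * a"] nn_integral_cong nn_integral_cmult[symmetric])
       (use FF_meas_x in measurable)
  also have "(\<integral>\<^sup>+ z. (\<integral>\<^sup>+ x. (\<Prod>j<N. indicator (E j) (z j)) * ennreal ((FF x z)\<^sup>2) \<partial>LL) \<partial>PP)
      = (\<integral>\<^sup>+ x. (\<integral>\<^sup>+ z. (\<Prod>j<N. indicator (E j) (z j)) * ennreal ((FF x z)\<^sup>2) \<partial>PP) \<partial>LL)"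
    by (rule pair_sigma_finite.Fubini'[OF pair_LP H_meas])
  also have "\<dots> \<le> (\<integral>\<^sup>+ x. ennreal ((1 / real N) ^ N) * ennreal (?R x) \<partial>LL)"
  proof (rule nn_integral_mono)
    fix x :: "real ^ 'd" assume "x \<in> space LL"
    then have x: "x \<in> torus_cube" by simp
    show "(\<integral>\<^sup>+ z. (\<Prod>j<N. indicator (E j) (z j)) * ennreal ((FF x z)\<^sup>2) \<partial>PP) \<le> ennreal ((1 / real N) ^ N) * ennreal (?R x)"
    proof -
      have "ennreal ((1 / real N) ^ N) * ennreal (?R x) = ennreal ((1 / real N) ^ N * ?R x)"
      proof (rule ennreal_mult[symmetric])
        show "0 \<le> ?R x" by (intro mult_nonneg_nonneg sum_nonneg) auto
      qed simp
      then show ?thesis using nnPF_bound[OF x] by simp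
    qed
  qed
  also have "\<dots> = ennreal ((1 / real N) ^ N) * (\<integral>\<^sup>+ x. ennreal (?R x) \<partial>LL)"
    by (rule nn_integral_cmult) (use bb_meas in measurable)
  finally have "Jfun N E f r \<le> ennreal (real N ^ N) * (ennreal ((1 / real N) ^ N) * (\<integral>\<^sup>+ x. ennreal (?R x) \<partial>LL))"
    by (simp add: mult_left_mono)
  also have "\<dots> = (\<integral>\<^sup>+ x. ennreal (?R x) \<partial>LL)"
  proof -
    have "ennreal (real N ^ N) * ennreal ((1 / real N) ^ N) = 1"
      using N by (simp add: ennreal_mult[symmetric] power_mult_distrib[symmetric])
    then show ?thesis by (simp add: mult.assoc[symmetric])
  qed
  finally show ?thesis .
qed

lemma measure_LL_space: "measure (LL :: (real ^ 'd) measure) (space LL) = 1"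
proof -
  have "emeasure LL (space LL) = 1" by (simp add: emeasure_restrict_space measure_cube)
  then show ?thesis by (simp add: measure_def)
qed

lemma sq_bound: "(a + b * indicator A y)\<^sup>2 \<le> 2 * a\<^sup>2 + 2 * b\<^sup>2 * (indicator A y :: real)"
proof -
  have "(a + b * indicator A y)\<^sup>2 \<le> 2 * a\<^sup>2 + 2 * (b * indicator A y)\<^sup>2"
    using sum_squares_ge_zero[of "a - b * indicator A y" 0] by (simp add: power2_eq_square algebra_simps)
  also have "(b * indicator A y)\<^sup>2 = b\<^sup>2 * (indicator A y :: real)"
    by (simp add: indicator_def power2_eq_square)
  finally show ?thesis by simp
qed

lemma int_R_term:
  fixes c k :: real
  shows "integral\<^sup>L LL (\<lambda>x. c + k * indicator (SS i) x) = c + k * measure LL (SS i)"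
proof -
  have A: "integrable LL (\<lambda>x::real^'d. c)"
    by (rule finite_measure.integrable_const[OF LL_finite])
  have B: "integrable LL (\<lambda>x. k * indicator (SS i) x)"
    by (intro integrable_mult_right integrable_real_indicator SS_LL)
       (simp add: finite_measure.emeasure_finite[OF LL_finite] less_top[symmetric])
  have C: "integral\<^sup>L LL (\<lambda>x::real^'d. c) = c"
    using measure_LL_space by (simp add: lebesgue_integral_const)
  have D: "integral\<^sup>L LL (\<lambda>x. k * indicator (SS i) x) = k * measure LL (SS i)"
  proof -
    have "SS i \<inter> torus_cube = SS i" by (auto simp: SS_def)
    then show ?thesis by simp
  qed
  show ?thesis using Bochner_Integration.integral_add[OF A B] by (simp only: C D)
qed

lemma R_int_bound:
  assumes rR: "r + \<delta> \<le> R0"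
  shows "(\<integral>\<^sup>+ x. ennreal ((1 / (real N)\<^sup>2) * (\<Sum>i<N. (bb i x)\<^sup>2)) \<partial>LL)
    \<le> ennreal ((1 / real N) * (2 * (\<delta> powr \<beta>)\<^sup>2 + 2 * (Mb f)\<^sup>2 * (shellK TYPE('d) R0 * \<delta>)))"
proof -
  let ?R' = "\<lambda>x. (1 / (real N)\<^sup>2) * (\<Sum>i<N. 2 * (\<delta> powr \<beta>)\<^sup>2 + 2 * (Mb f)\<^sup>2 * indicator (SS i) x)"
  have int: "integrable LL ?R'"
    by (intro integrable_mult_right Bochner_Integration.integrable_sum Bochner_Integration.integrable_add
          finite_measure.integrable_const[OF LL_finite] integrable_real_indicator SS_LL)
       (auto simp: finite_measure.emeasure_finite[OF LL_finite] less_top[symmetric])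
  have "(\<integral>\<^sup>+ x. ennreal ((1 / (real N)\<^sup>2) * (\<Sum>i<N. (bb i x)\<^sup>2)) \<partial>LL) \<le> (\<integral>\<^sup>+ x. ennreal (?R' x) \<partial>LL)"
  proof (intro nn_integral_mono ennreal_leI mult_left_mono sum_mono)
    fix x i show "(bb i x)\<^sup>2 \<le> 2 * (\<delta> powr \<beta>)\<^sup>2 + 2 * (Mb f)\<^sup>2 * indicator (SS i) x"
      unfolding bb_def by (rule sq_bound)
  qed simp
  also have "\<dots> = ennreal (integral\<^sup>L LL ?R')"
    by (rule nn_integral_eq_integral[OF int]) (intro AE_I2 mult_nonneg_nonneg sum_nonneg add_nonneg_nonneg; simp)
  also have "integral\<^sup>L LL ?R' = (1 / (real N)\<^sup>2) * (\<Sum>i<N. 2 * (\<delta> powr \<beta>)\<^sup>2 + 2 * (Mb f)\<^sup>2 * measure LL (SS i))"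
  proof -
    have ii: "\<And>i. integrable LL (\<lambda>x. 2 * (\<delta> powr \<beta>)\<^sup>2 + 2 * (Mb f)\<^sup>2 * indicator (SS i) x)"
      by (intro Bochner_Integration.integrable_add finite_measure.integrable_const[OF LL_finite]
            integrable_mult_right integrable_real_indicator SS_LL)
         (auto simp: finite_measure.emeasure_finite[OF LL_finite] less_top[symmetric])
    have "integral\<^sup>L LL ?R' = (1 / (real N)\<^sup>2) * (\<Sum>i<N. integral\<^sup>L LL (\<lambda>x. 2 * (\<delta> powr \<beta>)\<^sup>2 + 2 * (Mb f)\<^sup>2 * indicator (SS i) x))"
      using ii by (simp add: Bochner_Integration.integral_sum)
    also have "\<dots> = (1 / (real N)\<^sup>2) * (\<Sum>i<N. 2 * (\<delta> powr \<beta>)\<^sup>2 + 2 * (Mb f)\<^sup>2 * measure LL (SS i))"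
    proof -
      note int_R_term[of "2 * (\<delta> powr \<beta>)\<^sup>2" "2 * (Mb f)\<^sup>2"]
      then show ?thesis by simp
    qed
    finally show ?thesis .
  qed
  also have "(1 / (real N)\<^sup>2) * (\<Sum>i<N. 2 * (\<delta> powr \<beta>)\<^sup>2 + 2 * (Mb f)\<^sup>2 * measure LL (SS i))
      \<le> (1 / (real N)\<^sup>2) * (\<Sum>i<N. 2 * (\<delta> powr \<beta>)\<^sup>2 + 2 * (Mb f)\<^sup>2 * (shellK TYPE('d) R0 * \<delta>))"
  proof (intro mult_left_mono sum_mono add_left_mono)
    fix i assume i: "i \<in> {..<N}"
    have ptC: "pt i \<in> torus_cube" using pt_in[of i] Esub[of i] i by auto
    have "measure LL (SS i) = measure lebesgue (SS i)"
      by (rule measure_restrict_space) (auto simp: SS_def)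
    also have "\<dots> \<le> shellK TYPE('d) R0 * \<delta>"
      unfolding SS_def by (rule shell_measure[OF ptC d0 r0 rR])
    finally show "measure LL (SS i) \<le> shellK TYPE('d) R0 * \<delta>" .
  qed auto
  also have "\<dots> = (1 / real N) * (2 * (\<delta> powr \<beta>)\<^sup>2 + 2 * (Mb f)\<^sup>2 * (shellK TYPE('d) R0 * \<delta>))"
    using N by (simp add: power2_eq_square field_simps)
  finally show ?thesis by (simp add: ennreal_leI)
qed

end

end


lemma powr_m1: "0 < (x::real) \<Longrightarrow> x powr (-1 - a) = (1 / x) * x powr (- a)"
proof -
  assume x: "0 < x"
  have "x powr (-1 - a) = x powr (-1 + (- a))" by simp
  also have "\<dots> = x powr (-1) * x powr (- a)" by (rule powr_add)
  also have "x powr (-1) = 1 / x" using x by (simp add: powr_minus divide_inverse)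
  finally show ?thesis .
qed

lemma shellK_nonneg: "0 \<le> R \<Longrightarrow> 0 \<le> shellK TYPE('d::finite) R"
  unfolding shellK_def by (intro mult_nonneg_nonneg) (auto simp: unit_ball_vol_nonneg)

theorem theorem10:
  fixes f :: "real ^ 'd \<Rightarrow> real" and \<kappa>1 \<kappa>2 \<beta> :: real
  assumes "0 < \<kappa>1" and "\<kappa>1 \<le> \<kappa>2"
    and "0 < \<beta>" and "\<beta> \<le> 1"
    and "\<forall>x\<in>torus_cube. 0 \<le> f x"
    and "\<forall>x\<in>torus_cube. \<forall>y\<in>torus_cube. \<bar>f x - f y\<bar> \<le> tdist x y powr \<beta>"
  shows "\<exists>c>0. \<forall>(N::nat) (E :: nat \<Rightarrow> (real ^ 'd) set) r.
           0 < N \<longrightarrow>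
           (\<forall>j<N. E j \<in> sets lebesgue \<and> E j \<subseteq> torus_cube) \<longrightarrow>
           (\<forall>i<N. \<forall>j<N. i \<noteq> j \<longrightarrow> E i \<inter> E j = {}) \<longrightarrow>
           (\<Union>j<N. E j) = torus_cube \<longrightarrow>
           (\<forall>j<N. measure lebesgue (E j) = 1 / real N) \<longrightarrow>
           (\<forall>j<N. \<kappa>1 * real N powr (-1 / real CARD('d)) \<le> tdiam (E j)
                  \<and> tdiam (E j) \<le> \<kappa>2 * real N powr (-1 / real CARD('d))) \<longrightarrow>
           0 < r \<longrightarrow> r < 1/2 \<longrightarrow>
           Jfun N E f r \<le> ennreal (c * (if \<beta> < 1/2
                                      then real N powr (-1 - 2 * \<beta> / real CARD('d))
                                      else real N powr (-1 - 1 / real CARD('d))))"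
proof -
  note b0 = assms(3) and b1 = assms(4) and fnn = assms(5) and fhol = assms(6)
  have k2: "0 < \<kappa>2" using assms(1,2) by linarith
  define R0 where "R0 = 1/2 + \<kappa>2"
  define K where "K = shellK TYPE('d) R0"
  have K0: "0 \<le> K" unfolding K_def R0_def using k2 by (intro shellK_nonneg) auto
  define M where "M = Mb f"
  define c where "c = 2 * \<kappa>2 powr (2 * \<beta>) + 2 * M\<^sup>2 * K * \<kappa>2 + 1"
  have c0: "0 < c" unfolding c_def using K0 k2 by (intro add_nonneg_pos) auto
  show ?thesis
  proof (intro exI[of _ c] conjI c0 allI impI)
    fix N :: nat and E :: "nat \<Rightarrow> (real ^ 'd) set" and r :: real
    assume N: "0 < N" and E1: "\<forall>j<N. E j \<in> sets lebesgue \<and> E j \<subseteq> torus_cube"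
      and E2: "\<forall>i<N. \<forall>j<N. i \<noteq> j \<longrightarrow> E i \<inter> E j = {}"
      and E3: "(\<Union>j<N. E j) = torus_cube"
      and E4: "\<forall>j<N. measure lebesgue (E j) = 1 / real N"
      and E5: "\<forall>j<N. \<kappa>1 * real N powr (-1 / real CARD('d)) \<le> tdiam (E j)
                  \<and> tdiam (E j) \<le> \<kappa>2 * real N powr (-1 / real CARD('d))"
      and r0: "0 < r" and r1: "r < 1/2"
    define d where "d = real CARD('d)"
    have d1: "1 \<le> d" unfolding d_def by simp
    define \<delta> where "\<delta> = \<kappa>2 * real N powr (-1 / d)"
    have N1: "1 \<le> real N" using N by simp
    have d0: "0 \<le> \<delta>" unfolding \<delta>_def using k2 by simp
    have "real N powr (-1 / d) \<le> real N powr 0"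
      using N1 d1 by (intro powr_mono) auto
    then have "\<delta> \<le> \<kappa>2" unfolding \<delta>_def using k2 N by (simp add: mult_left_le)
    then have rR: "r + \<delta> \<le> R0" unfolding R0_def using r1 by simp
    have Ediam: "\<And>j. j < N \<Longrightarrow> tdiam (E j) \<le> \<delta>" using E5 unfolding \<delta>_def d_def by blast
    have J: "Jfun N E f r \<le> ennreal ((1 / real N) * (2 * (\<delta> powr \<beta>)\<^sup>2 + 2 * (Mb f)\<^sup>2 * (shellK TYPE('d) R0 * \<delta>)))"
      by (rule order_trans[OF Jfun_le R_int_bound])
         (use b0 b1 fnn fhol N E1 E2 E3 E4 Ediam r0 d0 rR in auto)
    define X1 where "X1 = real N powr (-1 - 2 * \<beta> / d)"
    define X2 where "X2 = real N powr (-1 - 1 / d)"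
    have X1: "(1 / real N) * (\<delta> powr \<beta>)\<^sup>2 = \<kappa>2 powr (2 * \<beta>) * X1"
    proof -
      have "(\<delta> powr \<beta>)\<^sup>2 = \<delta> powr (2 * \<beta>)"
        by (simp add: power2_eq_square powr_add[symmetric])
      also have "\<dots> = \<kappa>2 powr (2 * \<beta>) * (real N powr (-1 / d)) powr (2 * \<beta>)"
        unfolding \<delta>_def using k2 by (simp add: powr_mult)
      also have "(real N powr (-1 / d)) powr (2 * \<beta>) = real N powr (- (2 * \<beta> / d))"
        by (simp add: powr_powr)
      finally have "(\<delta> powr \<beta>)\<^sup>2 = \<kappa>2 powr (2 * \<beta>) * real N powr (- (2 * \<beta> / d))" .
      moreover have "(1 / real N) * real N powr (- (2 * \<beta> / d)) = X1"
        unfolding X1_def using N by (simp add: powr_m1)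
      ultimately show ?thesis by (metis mult.assoc mult.commute)
    qed
    have X2: "(1 / real N) * \<delta> = \<kappa>2 * X2"
    proof -
      have "X2 = (1 / real N) * real N powr (- (1 / d))" unfolding X2_def using N by (simp add: powr_m1)
      then show ?thesis unfolding \<delta>_def by (simp add: algebra_simps)
    qed
    have bound: "(1 / real N) * (2 * (\<delta> powr \<beta>)\<^sup>2 + 2 * (Mb f)\<^sup>2 * (shellK TYPE('d) R0 * \<delta>))
        = 2 * \<kappa>2 powr (2 * \<beta>) * X1 + 2 * M\<^sup>2 * K * \<kappa>2 * X2"
    proof -
      have "(1 / real N) * (2 * (\<delta> powr \<beta>)\<^sup>2 + 2 * (Mb f)\<^sup>2 * (shellK TYPE('d) R0 * \<delta>))
          = 2 * ((1 / real N) * (\<delta> powr \<beta>)\<^sup>2) + 2 * (Mb f)\<^sup>2 * shellK TYPE('d) R0 * ((1 / real N) * \<delta>)"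
        by (simp add: algebra_simps add_divide_distrib)
      also have "\<dots> = 2 * (\<kappa>2 powr (2 * \<beta>) * X1) + 2 * (Mb f)\<^sup>2 * shellK TYPE('d) R0 * (\<kappa>2 * X2)"
        unfolding X1 X2 ..
      finally show ?thesis unfolding M_def K_def by (simp add: algebra_simps)
    qed
    have X1nn: "0 \<le> X1" and X2nn: "0 \<le> X2" unfolding X1_def X2_def by auto
    have A0: "0 \<le> 2 * \<kappa>2 powr (2 * \<beta>)" and B0: "0 \<le> 2 * M\<^sup>2 * K * \<kappa>2"
      using K0 k2 by auto
    have fin: "2 * \<kappa>2 powr (2 * \<beta>) * X1 + 2 * M\<^sup>2 * K * \<kappa>2 * X2
        \<le> c * (if \<beta> < 1/2 then X1 else X2)"
    proof (cases "\<beta> < 1/2")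
      case True
      have "X2 \<le> X1" unfolding X1_def X2_def using True N1 d1
        by (intro powr_mono) (auto simp: divide_right_mono)
      then have "2 * \<kappa>2 powr (2 * \<beta>) * X1 + 2 * M\<^sup>2 * K * \<kappa>2 * X2
          \<le> 2 * \<kappa>2 powr (2 * \<beta>) * X1 + 2 * M\<^sup>2 * K * \<kappa>2 * X1"
        using B0 by (intro add_left_mono mult_left_mono) auto
      also have "\<dots> \<le> c * X1" unfolding c_def using X1nn by (simp add: algebra_simps)
      finally show ?thesis using True by simp
    next
      case False
      have "X1 \<le> X2" unfolding X1_def X2_def using False N1 d1
        by (intro powr_mono) (auto simp: divide_right_mono)
      then have "2 * \<kappa>2 powr (2 * \<beta>) * X1 + 2 * M\<^sup>2 * K * \<kappa>2 * X2
          \<le> 2 * \<kappa>2 powr (2 * \<beta>) * X2 + 2 * M\<^sup>2 * K * \<kappa>2 * X2"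
        using A0 by (intro add_right_mono mult_left_mono) auto
      also have "\<dots> \<le> c * X2" unfolding c_def using X2nn by (simp add: algebra_simps)
      finally show ?thesis using False by simp
    qed
    show "Jfun N E f r \<le> ennreal (c * (if \<beta> < 1/2
                                      then real N powr (-1 - 2 * \<beta> / real CARD('d))
                                      else real N powr (-1 - 1 / real CARD('d))))"
      using J fin unfolding bound X1_def X2_def d_def
      by (meson ennreal_leI order_trans)
  qed
qed


end
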